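(* Let $\theta$ be a complex Pisot number with $1<|\theta|^2<2$ and $\lambda=1/\theta$. Then $\theta$ has degree at least $3$, $\theta$ is an algebraic unit, and there is $\delta>0$ such that $|\widehat{\nu}_\lambda(2\pi\overline{\theta}^N)|\ge\delta$ for all integers $N\ge1$; in particular $\widehat{\nu}_\lambda(\xi)\not\to0$ as $|\xi|\to\infty$.
   Context: A non-real algebraic integer $\theta$ with $|\theta|>1$ is a complex Pisot number if all its Galois conjugates other than $\overline\theta$ have modulus less than one. $\nu_\lambda$ is the distribution of $\sum_{n\ge0}\pm\lambda^n$ with independent fair signs. Identifying $\mathbb R^2$ with $\mathbb C$, $\widehat{\nu}_\lambda(\xi)=\int e^{i\,\mathrm{Re}(t\overline\xi)}\,d\nu_\lambda(t)$ for $\xi\in\mathbb C$; one has $\widehat{\nu}_\lambda(\xi)=\prod_{n\ge0}\cos(\mathrm{Re}(\lambda^n\overline\xi))$. *)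

theory Defs
  imports "HOL-Analysis.Analysis" "HOL-Computational_Algebra.Computational_Algebra"
begin

text \<open>Galois conjugates of z: roots of its minimal polynomial over Q
  (any irreducible rational polynomial vanishing at z).\<close>
definition galois_conjugates :: "complex \<Rightarrow> complex set" where
  "galois_conjugates z = {w. \<exists>p :: rat poly. p \<noteq> 0 \<and> irreducible p \<and>
      poly (map_poly of_rat p) z = 0 \<and> poly (map_poly of_rat p) w = 0}"

definition alg_degree :: "complex \<Rightarrow> nat" where
  "alg_degree z = (LEAST n. \<exists>p :: rat poly. p \<noteq> 0 \<and> degree p = n \<and> poly (map_poly of_rat p) z = 0)"

definition complex_pisot :: "complex \<Rightarrow> bool" where
  "complex_pisot \<theta> \<longleftrightarrow> algebraic_int \<theta> \<and> Im \<theta> \<noteq> 0 \<and> cmod \<theta> > 1 \<and>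
     (\<forall>z \<in> galois_conjugates \<theta> - {\<theta>, cnj \<theta>}. cmod z < 1)"

definition algebraic_unit :: "complex \<Rightarrow> bool" where
  "algebraic_unit z \<longleftrightarrow> algebraic_int z \<and> algebraic_int (inverse z)"

text \<open>Fourier transform of the Bernoulli convolution nu_lambda, via its infinite product.\<close>
definition nu_hat :: "complex \<Rightarrow> complex \<Rightarrow> real" where
  "nu_hat l \<xi> = lim (\<lambda>N. \<Prod>n<N. cos (Re (l ^ n * cnj \<xi>)))"

end

theory Submission
  imports Defs "Jordan_Normal_Form.Char_Poly" "Berlekamp_Zassenhaus.Factor_Bound"
begin


lemma linprod_coeff:
  fixes as :: "'a::comm_ring_1 list"
  shows "Polynomial.coeff (\<Prod>a\<leftarrow>as. [:-a,1:]) (length as) = 1 \<and>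
         (\<forall>i>length as. Polynomial.coeff (\<Prod>a\<leftarrow>as. [:-a,1:]) i = 0)"
proof (induction as)
  case Nil
  then show ?case by (auto simp: coeff_1)
next
  case (Cons a as)
  let ?P = "\<Prod>a\<leftarrow>as. [:-a,1:]"
  have e: "[:-a,1:] * ?P = Polynomial.smult (-a) ?P + pCons 0 ?P"
    by (simp add: mult_pCons_left)
  show ?case
  proof (intro conjI allI impI)
    show "Polynomial.coeff (\<Prod>a\<leftarrow>a # as. [:- a, 1:]) (length (a # as)) = 1"
      using Cons by (simp add: e)
  next
    fix i assume "i > length (a # as)"
    then show "Polynomial.coeff (\<Prod>a\<leftarrow>a # as. [:- a, 1:]) i = 0"
      using Cons by (cases i) (auto simp: e)
  qed
qed

lemma psum_poly:
  fixes as :: "'a::idom list"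
  shows "\<exists>R. (\<forall>i\<ge>length as. Polynomial.coeff R i = 0) \<and> Polynomial.coeff R (length as - 1) = (\<Sum>a\<leftarrow>as. a^k) \<and>
      (\<Prod>a\<leftarrow>as. [:-a,1:]) dvd (Polynomial.monom 1 k * pderiv (\<Prod>a\<leftarrow>as. [:-a,1:]) - R)"
proof (induction as)
  case Nil
  then show ?case by (intro exI[of _ 0]) auto
next
  case (Cons a as)
  let ?P = "\<Prod>a\<leftarrow>as. [:-a,1:]"
  let ?n = "length as"
  from Cons obtain R where R1: "\<forall>i\<ge>?n. Polynomial.coeff R i = 0" and R2: "Polynomial.coeff R (?n - 1) = (\<Sum>a\<leftarrow>as. a^k)"
     and R3: "?P dvd (Polynomial.monom 1 k * pderiv ?P - R)" by blast
  define R' where "R' = Polynomial.smult (a^k) ?P + [:-a,1:] * R"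
  have e: "\<And>Q. [:-a,1:] * Q = Polynomial.smult (-a) Q + pCons 0 Q"
    by (simp add: mult_pCons_left)
  have Pc: "Polynomial.coeff ?P ?n = 1" "\<And>i. i > ?n \<Longrightarrow> Polynomial.coeff ?P i = 0" using linprod_coeff[of as] by auto
  have c1: "\<forall>i\<ge>length (a#as). Polynomial.coeff R' i = 0"
  proof (intro allI impI)
    fix i assume i: "i \<ge> length (a#as)"
    then obtain j where j: "i = Suc j" "j \<ge> ?n" by (cases i) auto
    show "Polynomial.coeff R' i = 0" using R1 Pc(2)[of i] i j by (simp add: R'_def e)
  qed
  have c2: "Polynomial.coeff R' (length (a#as) - 1) = (\<Sum>a\<leftarrow>a#as. a^k)"
  proof (cases ?n)
    case 0
    then show ?thesis using R1 by (simp add: R'_def e)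
  next
    case (Suc m)
    then show ?thesis using R1 R2 Pc(1) by (simp add: R'_def e)
  qed
  have "poly (Polynomial.monom 1 k - [:a^k:]) a = 0" by (simp add: poly_monom)
  hence d1: "[:-a,1:] dvd (Polynomial.monom 1 k - [:a^k:])"
    using poly_eq_0_iff_dvd by blast
  have pd1: "pderiv [:-a,1:] = 1" by (simp add: pderiv_pCons)
  have pd: "pderiv (\<Prod>a\<leftarrow>a#as. [:-a,1:]) = [:-a,1:] * pderiv ?P + ?P"
    by (simp only: prod_list.Cons list.map pderiv_mult pd1 mult_1_right)
  have R'': "R' = [:a^k:] * ?P + [:-a,1:] * R" by (simp add: R'_def)
  have gen: "\<And>m x d y c r :: 'a poly. m*(x*d+y) - (c*y + x*r) = x*(m*d - r) + (m - c)*y"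
    by (simp add: algebra_simps)
  have eq: "Polynomial.monom 1 k * pderiv (\<Prod>a\<leftarrow>a#as. [:-a,1:]) - R' =
     [:-a,1:] * (Polynomial.monom 1 k * pderiv ?P - R) + (Polynomial.monom 1 k - [:a^k:]) * ?P"
    unfolding pd R'' by (rule gen)
  have "(\<Prod>a\<leftarrow>a#as. [:-a,1:]) dvd Polynomial.monom 1 k * pderiv (\<Prod>a\<leftarrow>a#as. [:-a,1:]) - R'"
    unfolding eq
  proof (rule dvd_add)
    show "(\<Prod>a\<leftarrow>a # as. [:- a, 1:]) dvd [:- a, 1:] * (Polynomial.monom 1 k * pderiv ?P - R)"
      by (simp only: prod_list.Cons list.map) (rule mult_dvd_mono[OF dvd_refl R3])
    show "(\<Prod>a\<leftarrow>a # as. [:- a, 1:]) dvd (Polynomial.monom 1 k - [:a ^ k:]) * ?P"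
      by (simp only: prod_list.Cons list.map) (rule mult_dvd_mono[OF d1 dvd_refl])
  qed
  then show ?case using c1 c2 by blast
qed

lemma psum_int:
  fixes P :: "int poly" and as :: "complex list"
  assumes mon: "lead_coeff P = 1" and fac: "map_poly of_int P = (\<Prod>a\<leftarrow>as. [:-a,1:])"
  shows "(\<Sum>a\<leftarrow>as. a^k) \<in> \<int>"
proof -
  let ?C = "map_poly (of_int :: int \<Rightarrow> complex)"
  let ?n = "length as"
  have degP: "degree P = ?n"
  proof -
    have "degree (?C P) = degree P" by simp
    moreover have "degree (\<Prod>a\<leftarrow>as. [:-a,1:]) = ?n"
    proof (rule antisym)
      show "degree (\<Prod>a\<leftarrow>as. [:-a,1:]) \<le> ?n"
        using linprod_coeff[of as] by (intro degree_le) blast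
      show "?n \<le> degree (\<Prod>a\<leftarrow>as. [:-a,1:])"
        using linprod_coeff[of as] by (intro le_degree) simp
    qed
    ultimately show ?thesis using fac by simp
  qed
  obtain R where R1: "\<forall>i\<ge>?n. Polynomial.coeff R i = 0" and R2: "Polynomial.coeff R (?n - 1) = (\<Sum>a\<leftarrow>as. a^k)"
     and R3: "?C P dvd (Polynomial.monom 1 k * pderiv (?C P) - R)" using psum_poly[of as k] fac by auto
  have P0: "P \<noteq> 0" using mon by auto
  obtain q r where qr: "pseudo_divmod (Polynomial.monom 1 k * pderiv P) P = (q, r)" by (cases "pseudo_divmod (Polynomial.monom 1 k * pderiv P) P")
  from pseudo_divmod[OF P0 qr] mon
  have qr1: "Polynomial.monom 1 k * pderiv P = P * q + r" and qr2: "r = 0 \<or> degree r < degree P" by auto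
  have "?C (Polynomial.monom 1 k * pderiv P) = ?C (P * q + r)" using qr1 by simp
  hence "Polynomial.monom 1 k * pderiv (?C P) = ?C P * ?C q + ?C r"
    by (simp only: of_int_hom.map_poly_pderiv[symmetric] of_int_poly_hom.hom_mult of_int_poly_hom.hom_add)
      (simp add: map_poly_monom)
  hence e2: "Polynomial.monom 1 k * pderiv (?C P) - ?C r = ?C P * ?C q" by simp
  have e3: "R - ?C r = (Polynomial.monom 1 k * pderiv (?C P) - ?C r) - (Polynomial.monom 1 k * pderiv (?C P) - R)"
    by simp
  have "?C P dvd (R - ?C r)" unfolding e3 e2 by (rule dvd_diff[OF _ R3]) simp
  have r1: "\<forall>i\<ge>?n. Polynomial.coeff (?C r) i = 0"
    using qr2 degP by (auto simp: coeff_eq_0)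
  have "R = ?C r"
  proof (rule ccontr)
    assume ne: "R \<noteq> ?C r"
    hence "R - ?C r \<noteq> 0" by simp
    from dvd_imp_degree_le[OF \<open>?C P dvd (R - ?C r)\<close> this]
    have "degree (R - ?C r) \<ge> ?n" using degP by simp
    hence "Polynomial.coeff R (degree (R - ?C r)) = 0" "Polynomial.coeff (?C r) (degree (R - ?C r)) = 0"
      using R1 r1 by blast+
    hence "Polynomial.coeff (R - ?C r) (degree (R - ?C r)) = 0" by (simp only: coeff_diff) simp
    thus False using \<open>R - ?C r \<noteq> 0\<close> leading_coeff_0_iff by blast
  qed
  hence "(\<Sum>a\<leftarrow>as. a^k) = of_int (Polynomial.coeff r (?n - 1))" using R2 by simp
  thus ?thesis by simp
qed



definition eig_set :: "nat \<Rightarrow> complex vec \<Rightarrow> complex set" where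
  "eig_set n v = {z. \<exists>A :: int mat. A \<in> carrier_mat n n \<and> map_mat of_int A *\<^sub>v v = z \<cdot>\<^sub>v v}"

lemma eig_set_add:
  assumes "v \<in> carrier_vec n" "x \<in> eig_set n v" "y \<in> eig_set n v"
  shows "x + y \<in> eig_set n v"
proof -
  from assms obtain A B :: "int mat" where A: "A \<in> carrier_mat n n" "map_mat of_int A *\<^sub>v v = x \<cdot>\<^sub>v v"
    and B: "B \<in> carrier_mat n n" "map_mat of_int B *\<^sub>v v = y \<cdot>\<^sub>v v" unfolding eig_set_def by auto
  have e: "map_mat (of_int :: int \<Rightarrow> complex) (A + B) = map_mat of_int A + map_mat of_int B"
    using A B by (intro eq_matI) auto
  have "map_mat of_int (A + B) *\<^sub>v v = map_mat of_int A *\<^sub>v v + map_mat of_int B *\<^sub>v v"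
    unfolding e using A B assms(1) by (intro add_mult_distrib_mat_vec) auto
  also have "\<dots> = (x + y) \<cdot>\<^sub>v v" using A B by (simp add: add_smult_distrib_vec)
  finally show ?thesis unfolding eig_set_def using A B by (intro CollectI exI[of _ "A + B"]) auto
qed

lemma eig_set_mult:
  assumes "v \<in> carrier_vec n" "x \<in> eig_set n v" "y \<in> eig_set n v"
  shows "x * y \<in> eig_set n v"
proof -
  from assms obtain A B :: "int mat" where A: "A \<in> carrier_mat n n" "map_mat of_int A *\<^sub>v v = x \<cdot>\<^sub>v v"
    and B: "B \<in> carrier_mat n n" "map_mat of_int B *\<^sub>v v = y \<cdot>\<^sub>v v" unfolding eig_set_def by auto
  have e: "map_mat (of_int :: int \<Rightarrow> complex) (A * B) = map_mat of_int A * map_mat of_int B"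
    using A B by (intro of_int_hom.mat_hom_mult) auto
  have "map_mat of_int (A * B) *\<^sub>v v = map_mat of_int A *\<^sub>v (map_mat of_int B *\<^sub>v v)"
    unfolding e using A B assms(1) by (intro assoc_mult_mat_vec) auto
  also have "\<dots> = y \<cdot>\<^sub>v (map_mat of_int A *\<^sub>v v)" unfolding B(2) using A assms(1)
    by (intro mult_mat_vec) auto
  also have "\<dots> = (x * y) \<cdot>\<^sub>v v" unfolding A(2) by (simp add: smult_smult_assoc mult.commute)
  finally show ?thesis unfolding eig_set_def using A B by (intro CollectI exI[of _ "A * B"]) auto
qed

lemma eig_set_one:
  assumes "v \<in> carrier_vec n"
  shows "1 \<in> eig_set n v"
  unfolding eig_set_def using assms by (intro CollectI exI[of _ "1\<^sub>m n"]) (auto simp: of_int_hom.mat_hom_one)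

lemma eig_set_power:
  assumes "v \<in> carrier_vec n" "x \<in> eig_set n v"
  shows "x ^ k \<in> eig_set n v"
  by (induction k) (use assms eig_set_one eig_set_mult in auto)

lemma eig_set_alg_int:
  assumes "v \<in> carrier_vec n" "v \<noteq> 0\<^sub>v n" "z \<in> eig_set n v"
  shows "algebraic_int z"
proof -
  from assms obtain A :: "int mat" where A: "A \<in> carrier_mat n n" "map_mat of_int A *\<^sub>v v = z \<cdot>\<^sub>v v"
    unfolding eig_set_def by auto
  have cA: "map_mat (of_int :: int \<Rightarrow> complex) A \<in> carrier_mat n n" using A by auto
  have "eigenvalue (map_mat of_int A) z" unfolding eigenvalue_def eigenvector_def
    using A assms by auto
  hence "poly (char_poly (map_mat of_int A)) z = 0" using eigenvalue_root_char_poly[OF cA] by auto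
  hence "poly (of_int_poly (char_poly A)) z = 0" by (subst (asm) of_int_hom.char_poly_hom[OF A(1)])
  moreover have "lead_coeff (char_poly A) = 1" using degree_monic_char_poly[OF A(1)] by simp
  ultimately show ?thesis using algebraic_int_altdef_ipoly by blast
qed



lemma sum_divmod:
  fixes F :: "nat \<Rightarrow> nat \<Rightarrow> 'a::comm_monoid_add"
  shows "(\<Sum>l<d*d. F (l div d) (l mod d)) = (\<Sum>m<d. \<Sum>t<d. F m t)"
proof -
  have "(\<Sum>l<d*d. F (l div d) (l mod d)) = (\<Sum>m<d. \<Sum>l\<in>{m*d..<m*d+d}. F (l div d) (l mod d))"
    using sum.nat_group[of "\<lambda>l. F (l div d) (l mod d)" d d] by simp
  also have "\<dots> = (\<Sum>m<d. \<Sum>t<d. F m t)"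
  proof (rule sum.cong[OF refl])
    fix m assume m: "m \<in> {..<d}"
    have "(\<Sum>l\<in>{m*d..<m*d+d}. F (l div d) (l mod d)) = (\<Sum>l\<in>{0+m*d..<d+m*d}. F (l div d) (l mod d))"
      by (simp add: add.commute)
    also have "\<dots> = (\<Sum>t\<in>{0..<d}. F ((t + m*d) div d) ((t + m*d) mod d))"
      by (rule sum.shift_bounds_nat_ivl)
    also have "\<dots> = (\<Sum>t<d. F m t)"
      using m by (intro sum.cong) (auto simp: atLeast0LessThan)
    finally show "(\<Sum>l\<in>{m*d..<m*d+d}. F (l div d) (l mod d)) = (\<Sum>t<d. F m t)" .
  qed
  finally show ?thesis .
qed

lemma sum_lt_dd:
  fixes f :: "nat \<Rightarrow> 'a::comm_monoid_add"
  shows "(\<Sum>l<d*d. f l) = (\<Sum>m<d. \<Sum>t<d. f (m*d + t))"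
proof -
  have "(\<Sum>l<d*d. f l) = (\<Sum>l<d*d. f ((l div d) * d + l mod d))" by simp
  also have "\<dots> = (\<Sum>m<d. \<Sum>t<d. f (m*d + t))"
    by (rule sum_divmod[where F = "\<lambda>m t. f (m*d + t)"])
  finally show ?thesis .
qed

lemma root_top:
  fixes P :: "int poly" and x :: complex
  assumes mon: "lead_coeff P = 1" and r: "poly (of_int_poly P) x = 0"
  shows "x ^ degree P = - (\<Sum>j<degree P. of_int (Polynomial.coeff P j) * x^j)"
proof -
  have "0 = (\<Sum>j\<le>degree P. of_int (Polynomial.coeff P j) * x^j)"
    using r by (simp add: poly_altdef)
  also have "\<dots> = (\<Sum>j<degree P. of_int (Polynomial.coeff P j) * x^j) + x ^ degree P"
    using mon by (simp add: lessThan_Suc_atMost[symmetric])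
  finally show ?thesis by (simp add: eq_neg_iff_add_eq_0 add.commute)
qed

lemma divmod_unique:
  fixes m n t b d :: nat
  assumes "t < d" "b < d"
  shows "(m*d+t = n*d+b) \<longleftrightarrow> (m = n \<and> t = b)"
proof
  assume e: "m*d+t = n*d+b"
  have d0: "d > 0" using assms by simp
  have "(m*d+t) div d = m" "(m*d+t) mod d = t" using assms d0 by simp_all
  moreover have "(n*d+b) div d = n" "(n*d+b) mod d = b" using assms d0 by simp_all
  ultimately show "m = n \<and> t = b" using e by metis
qed simp

lemma lt_dd:
  fixes m t d :: nat
  assumes "m < d" "t < d"
  shows "m*d+t < d*d"
proof -
  have "m*d + t < Suc m * d" using assms by simp
  also have "Suc m * d \<le> d*d" using assms by (intro mult_le_mono1) simp
  finally show ?thesis .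
qed

lemma two_roots_alg_int:
  fixes P :: "int poly" and x y :: complex
  assumes mon: "lead_coeff P = 1" and rx: "poly (of_int_poly P) x = 0" and ry: "poly (of_int_poly P) y = 0"
  shows "algebraic_int (x^k + y^k)"
proof -
  define d where "d = degree P"
  define c where "c = (\<lambda>j. Polynomial.coeff P j)"
  have d0: "d > 0"
  proof (rule ccontr)
    assume "\<not> d > 0"
    hence "degree P = 0" by (simp add: d_def)
    hence "P = [:1:]" using mon degree_0_id[of P] by simp
    thus False using rx by simp
  qed
  define v where "v = vec (d*d) (\<lambda>i. x^(i div d) * y^(i mod d))"
  have v: "v \<in> carrier_vec (d*d)" unfolding v_def by simp
  have v0: "v \<noteq> 0\<^sub>v (d*d)"
  proof
    assume "v = 0\<^sub>v (d*d)"
    hence "v $ 0 = 0" using d0 by simp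
    thus False using d0 by (simp add: v_def)
  qed
  have xt: "x ^ d = - (\<Sum>j<d. of_int (c j) * x^j)" using root_top[OF mon rx] by (simp add: d_def c_def)
  have yt: "y ^ d = - (\<Sum>j<d. of_int (c j) * y^j)" using root_top[OF mon ry] by (simp add: d_def c_def)
  define Mx :: "int mat" where "Mx = mat (d*d) (d*d) (\<lambda>(i,l). if Suc (i div d) < d then (if l = i + d then 1 else 0)
     else (if l mod d = i mod d then - c (l div d) else 0))"
  define My :: "int mat" where "My = mat (d*d) (d*d) (\<lambda>(i,l). if Suc (i mod d) < d then (if l = i + 1 then 1 else 0)
     else (if l div d = i div d then - c (l mod d) else 0))"
  have "x \<in> eig_set (d*d) v"
    unfolding eig_set_def
  proof (intro CollectI exI[of _ Mx] conjI)
    show "Mx \<in> carrier_mat (d*d) (d*d)" by (simp add: Mx_def)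
    show "map_mat of_int Mx *\<^sub>v v = x \<cdot>\<^sub>v v"
    proof (rule eq_vecI)
      fix i assume i: "i < dim_vec (x \<cdot>\<^sub>v v)"
      hence i': "i < d*d" by (simp add: v_def)
      define a where "a = i div d"
      define b where "b = i mod d"
      have ab: "a < d" "b < d" "i = a*d + b" using i' d0 by (auto simp: a_def b_def less_mult_imp_div_less)
      have vi: "v $ i = x^a * y^b" using i' by (simp add: v_def a_def b_def)
      have "(map_mat of_int Mx *\<^sub>v v) $ i = (\<Sum>l<d*d. of_int (Mx $$ (i,l)) * v $ l)"
        using i' by (simp add: Mx_def v_def scalar_prod_def row_def atLeast0LessThan)
      also have "\<dots> = (\<Sum>m<d. \<Sum>t<d. of_int (Mx $$ (i,m*d+t)) * v $ (m*d+t))"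
        by (rule sum_lt_dd)
      also have "\<dots> = x * v $ i"
      proof (cases "Suc a < d")
        case True
        have "(\<Sum>m<d. \<Sum>t<d. of_int (Mx $$ (i,m*d+t)) * v $ (m*d+t)) =
              (\<Sum>m<d. \<Sum>t<d. if t = b then (if m = Suc a then x^(Suc a) * y^b else 0) else 0)"
        proof (intro sum.cong refl)
          fix m t assume "m \<in> {..<d}" "t \<in> {..<d}"
          hence mt: "m < d" "t < d" by auto
          have mtl: "m*d+t < d*d" using mt by (rule lt_dd)
          have eqn: "i + d = Suc a * d + b" using ab by simp
          have "(m*d+t = i + d) = (m = Suc a \<and> t = b)"
            by (simp only: eqn divmod_unique[OF mt(2) ab(2)])
          then show "of_int (Mx $$ (i,m*d+t)) * v $ (m*d+t) = (if t = b then (if m = Suc a then x^(Suc a) * y^b else 0) else 0)"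
            using True i' mtl mt d0 by (auto simp: Mx_def v_def a_def[symmetric])
        qed
        also have "\<dots> = x^(Suc a) * y^b" using True ab by (simp add: sum.delta')
        also have "\<dots> = x * v $ i" unfolding vi by simp
        finally show ?thesis .
      next
        case False
        hence a1: "a = d - 1" using ab by auto
        have "(\<Sum>m<d. \<Sum>t<d. of_int (Mx $$ (i,m*d+t)) * v $ (m*d+t)) =
              (\<Sum>m<d. \<Sum>t<d. if t = b then - of_int (c m) * x^m * y^b else 0)"
        proof (intro sum.cong refl)
          fix m t assume "m \<in> {..<d}" "t \<in> {..<d}"
          hence mt: "m < d" "t < d" by auto
          have mtl: "m*d+t < d*d" using mt by (rule lt_dd)
          show "of_int (Mx $$ (i,m*d+t)) * v $ (m*d+t) = (if t = b then - of_int (c m) * x^m * y^b else 0)"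
            using False i' mtl mt d0 by (auto simp: Mx_def v_def a_def[symmetric] b_def[symmetric])
        qed
        also have "\<dots> = (\<Sum>m<d. - of_int (c m) * x^m * y^b)" using ab by (simp add: sum.delta)
        also have "\<dots> = x^d * y^b" unfolding xt by (simp add: sum_distrib_right sum_negf)
        also have "\<dots> = x * v $ i" unfolding vi using a1 d0
          by (metis Suc_diff_1 mult.assoc power_Suc)
        finally show ?thesis .
      qed
      finally show "(map_mat of_int Mx *\<^sub>v v) $ i = (x \<cdot>\<^sub>v v) $ i" using i' by (simp add: v_def)
    qed (simp add: Mx_def v_def)
  qed
  moreover have "y \<in> eig_set (d*d) v"
    unfolding eig_set_def
  proof (intro CollectI exI[of _ My] conjI)
    show "My \<in> carrier_mat (d*d) (d*d)" by (simp add: My_def)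
    show "map_mat of_int My *\<^sub>v v = y \<cdot>\<^sub>v v"
    proof (rule eq_vecI)
      fix i assume i: "i < dim_vec (y \<cdot>\<^sub>v v)"
      hence i': "i < d*d" by (simp add: v_def)
      define a where "a = i div d"
      define b where "b = i mod d"
      have ab: "a < d" "b < d" "i = a*d + b" using i' d0 by (auto simp: a_def b_def less_mult_imp_div_less)
      have vi: "v $ i = x^a * y^b" using i' by (simp add: v_def a_def b_def)
      have "(map_mat of_int My *\<^sub>v v) $ i = (\<Sum>l<d*d. of_int (My $$ (i,l)) * v $ l)"
        using i' by (simp add: My_def v_def scalar_prod_def row_def atLeast0LessThan)
      also have "\<dots> = (\<Sum>m<d. \<Sum>t<d. of_int (My $$ (i,m*d+t)) * v $ (m*d+t))"
        by (rule sum_lt_dd)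
      also have "\<dots> = y * v $ i"
      proof (cases "Suc b < d")
        case True
        have "(\<Sum>m<d. \<Sum>t<d. of_int (My $$ (i,m*d+t)) * v $ (m*d+t)) =
              (\<Sum>m<d. \<Sum>t<d. if t = Suc b then (if m = a then x^a * y^(Suc b) else 0) else 0)"
        proof (intro sum.cong refl)
          fix m t assume "m \<in> {..<d}" "t \<in> {..<d}"
          hence mt: "m < d" "t < d" by auto
          have mtl: "m*d+t < d*d" using mt by (rule lt_dd)
          have eqn: "i + 1 = a * d + Suc b" using ab by simp
          have "(m*d+t = i + 1) = (m = a \<and> t = Suc b)"
            by (simp only: eqn divmod_unique[OF mt(2) True])
          then show "of_int (My $$ (i,m*d+t)) * v $ (m*d+t) = (if t = Suc b then (if m = a then x^a * y^(Suc b) else 0) else 0)"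
            using True i' mtl mt d0 by (auto simp: My_def v_def b_def[symmetric])
        qed
        also have "\<dots> = x^a * y^(Suc b)" using True ab by (simp add: sum.delta')
        also have "\<dots> = y * v $ i" unfolding vi by simp
        finally show ?thesis .
      next
        case False
        hence b1: "b = d - 1" using ab by auto
        have "(\<Sum>m<d. \<Sum>t<d. of_int (My $$ (i,m*d+t)) * v $ (m*d+t)) =
              (\<Sum>m<d. \<Sum>t<d. if m = a then - of_int (c t) * x^a * y^t else 0)"
        proof (intro sum.cong refl)
          fix m t assume "m \<in> {..<d}" "t \<in> {..<d}"
          hence mt: "m < d" "t < d" by auto
          have mtl: "m*d+t < d*d" using mt by (rule lt_dd)
          show "of_int (My $$ (i,m*d+t)) * v $ (m*d+t) = (if m = a then - of_int (c t) * x^a * y^t else 0)"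
            using False i' mtl mt d0 by (auto simp: My_def v_def a_def[symmetric] b_def[symmetric])
        qed
        also have "\<dots> = (\<Sum>m<d. if m = a then (\<Sum>t<d. - of_int (c t) * x^a * y^t) else 0)"
          by (intro sum.cong refl) (cases "m = a"; simp)
        also have "\<dots> = (\<Sum>t<d. - of_int (c t) * x^a * y^t)" using ab by (simp add: sum.delta')
        also have "\<dots> = x^a * y^d" unfolding yt
          by (simp add: sum_distrib_left sum_negf mult.commute mult.left_commute)
        also have "\<dots> = y * v $ i" unfolding vi using b1 d0
          by (metis Suc_diff_1 mult.left_commute power_Suc)
        finally show ?thesis .
      qed
      finally show "(map_mat of_int My *\<^sub>v v) $ i = (y \<cdot>\<^sub>v v) $ i" using i' by (simp add: v_def)
    qed (simp add: My_def v_def)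
  qed
  ultimately have "x^k + y^k \<in> eig_set (d*d) v"
    using v by (intro eig_set_add eig_set_power)
  thus ?thesis using v v0 by (rule eig_set_alg_int[rotated 2])
qed


lemma alg_int_re_pow:
  assumes "algebraic_int (x::complex)"
  shows "algebraic_int (x^k + cnj x ^ k)"
proof -
  from assms obtain P :: "int poly" where P: "poly (of_int_poly P) x = 0" "lead_coeff P = 1"
    using algebraic_int_altdef_ipoly by blast
  have "poly (of_int_poly P) (cnj x) = cnj (poly (of_int_poly P) x)"
    by (simp add: poly_altdef)
  hence "poly (of_int_poly P) (cnj x) = 0" using P by simp
  thus ?thesis using two_roots_alg_int[OF P(2) P(1)] by blast
qed



abbreviation ratc :: "rat poly \<Rightarrow> complex poly" where "ratc \<equiv> map_poly of_rat"

lemma ratc_mult: "ratc (p * q) = ratc p * ratc q"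
  by (simp add: poly_eq_iff coeff_mult of_rat_mult of_rat_sum)

lemma ratc_of_int: "ratc (of_int_poly Q) = of_int_poly Q"
  by (simp add: map_poly_map_poly o_def)

lemma rat_clear: "\<exists>N>0. \<exists>PZ::int poly. of_int_poly PZ = Polynomial.smult (of_int N) (p::rat poly)"
proof -
  obtain d q where dq: "rat_to_int_poly p = (d, q)" by (cases "rat_to_int_poly p")
  from rat_to_int_poly[OF dq] have "p = Polynomial.smult (inverse (of_int d)) (of_int_poly q)" "d > 0" by auto
  hence "of_int_poly q = Polynomial.smult (of_int d) p" by simp
  thus ?thesis using \<open>d > 0\<close> by blast
qed

lemma gauss_monic:
  fixes p g :: "rat poly" and Q :: "int poly"
  assumes mp: "lead_coeff p = 1" and mg: "lead_coeff g = 1" and Q: "of_int_poly Q = p * g"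
  shows "\<exists>P::int poly. of_int_poly P = p"
proof -
  obtain N PZ where N: "N > 0" "of_int_poly PZ = Polynomial.smult (of_int N) p" using rat_clear by blast
  obtain M GZ where M: "M > 0" "of_int_poly GZ = Polynomial.smult (of_int M) g" using rat_clear by blast
  have "of_int_poly (PZ * GZ) = (of_int_poly (Polynomial.smult (N*M) Q) :: rat poly)"
    using N M Q by (simp add: hom_distribs mult.commute[of "rat_of_int M"])
  hence PG: "PZ * GZ = Polynomial.smult (N*M) Q" using of_int_poly_hom.eq_iff by blast
  have "lead_coeff (of_int_poly Q :: rat poly) = 1" using Q mp mg by (simp add: lead_coeff_mult)
  hence lQ: "lead_coeff Q = 1" by simp
  have cQ: "content Q = 1"
  proof -
    have "content Q dvd 1" using content_dvd_coeff[of Q "degree Q"] lQ by simp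
    thus ?thesis using content_ge_0_int[of Q] by (simp add: zdvd1_eq)
  qed
  have cc: "content PZ * content GZ = N * M"
    using arg_cong[OF PG, of content] cQ N M by (simp add: content_mult content_smult abs_mult)
  have "of_int (Polynomial.coeff PZ (degree p)) = (of_int N :: rat)"
    using arg_cong[OF N(2), of "\<lambda>r. Polynomial.coeff r (degree p)"] mp by simp
  hence lP: "Polynomial.coeff PZ (degree p) = N" by simp
  have "of_int (Polynomial.coeff GZ (degree g)) = (of_int M :: rat)"
    using arg_cong[OF M(2), of "\<lambda>r. Polynomial.coeff r (degree g)"] mg by simp
  hence lG: "Polynomial.coeff GZ (degree g) = M" by simp
  obtain u where u: "N = content PZ * u" using content_dvd_coeff[of PZ "degree p"] lP by (auto elim: dvdE)
  obtain w where w: "M = content GZ * w" using content_dvd_coeff[of GZ "degree g"] lG by (auto elim: dvdE)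
  have cp: "content PZ > 0" using cc N M content_ge_0_int[of PZ]
    by (metis less_le mult_eq_0_iff not_less_iff_gr_or_eq)
  have cg: "content GZ > 0" using cc N M content_ge_0_int[of GZ]
    by (metis less_le mult_eq_0_iff not_less_iff_gr_or_eq)
  have "content PZ * content GZ * (u * w) = content PZ * content GZ * 1"
    using cc u w by (simp add: algebra_simps)
  moreover have nz: "content PZ * content GZ \<noteq> 0" using cp cg by (metis mult_pos_pos less_irrefl)
  ultimately have uw: "u * w = 1" using mult_left_cancel[OF nz] by blast
  have "u > 0" using u N cp by (simp add: zero_less_mult_iff)
  hence "u = 1" using uw by (metis pos_zmult_eq_1_iff)
  hence cN: "content PZ = N" using u by simp
  define P where "P = map_poly (\<lambda>z. z div N) PZ"
  have "of_int_poly P = p"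
  proof (rule poly_eqI)
    fix i
    have dv: "N dvd Polynomial.coeff PZ i" using content_dvd_coeff[of PZ i] cN by simp
    have "Polynomial.coeff (of_int_poly P :: rat poly) i = of_int (Polynomial.coeff PZ i div N)"
      by (simp add: P_def coeff_map_poly)
    also have "\<dots> = of_int (Polynomial.coeff PZ i) / of_int N" using dv N by (simp add: of_int_div)
    also have "of_int (Polynomial.coeff PZ i) = (Polynomial.coeff (of_int_poly PZ) i :: rat)" by simp
    also have "\<dots> = of_int N * Polynomial.coeff p i" using N(2) by simp
    finally show "Polynomial.coeff (of_int_poly P) i = Polynomial.coeff p i" using N by simp
  qed
  thus ?thesis by blast
qed



lemma cnj_of_rat: "cnj (of_rat r :: complex) = of_rat r"
proof -
  obtain a b where "quotient_of r = (a,b)" by fastforce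
  hence "r = of_int a / of_int b" by (rule quotient_of_div)
  thus ?thesis by (simp add: of_rat_divide)
qed

lemma ratc_cnj: "poly (ratc q) (cnj z) = cnj (poly (ratc q) z)"
  by (simp add: poly_altdef cnj_of_rat)

lemma prod_list_remove1:
  fixes f :: "'a \<Rightarrow> 'b::comm_monoid_mult"
  assumes "x \<in> set xs"
  shows "(\<Prod>a\<leftarrow>xs. f a) = f x * (\<Prod>a\<leftarrow>remove1 x xs. f a)"
  using assms by (induction xs) (auto simp: ac_simps)

lemma sum_list_remove1':
  fixes f :: "'a \<Rightarrow> 'b::comm_monoid_add"
  assumes "x \<in> set xs"
  shows "(\<Sum>a\<leftarrow>xs. f a) = f x + (\<Sum>a\<leftarrow>remove1 x xs. f a)"
  using assms by (induction xs) (auto simp: ac_simps)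

lemma poly_linprod: "poly (\<Prod>a\<leftarrow>as. [:-a,1:]) z = (\<Prod>a\<leftarrow>as. z - a)"
  for z :: "'a::comm_ring_1"
  by (induction as) (auto simp: algebra_simps)

lemma linprod_root_iff: "poly (\<Prod>a\<leftarrow>as. [:-a,1:]) z = 0 \<longleftrightarrow> z \<in> set as"
  for z :: "'a::idom"
  by (induction as) auto

lemma prod_cmod_le1:
  assumes "\<forall>w\<in>set ws. cmod w < 1" and that: "\<And>w. cmod (f w) = cmod w"
  shows "cmod (\<Prod>w\<leftarrow>ws. f w) \<le> 1"
  using assms(1)
proof (induction ws)
  case Nil then show ?case by simp
next
  case (Cons a ws)
  have "cmod (\<Prod>w\<leftarrow>a#ws. f w) = cmod (f a) * cmod (\<Prod>w\<leftarrow>ws. f w)"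
    by (simp only: list.map prod_list.Cons norm_mult)
  also have "\<dots> \<le> 1 * 1" by (rule mult_mono[OF _ _ zero_le_one norm_ge_zero]) (use Cons that in auto)
  finally show ?case by simp
qed

lemma double_root_deriv:
  fixes z :: complex
  assumes "PC = [:-z,1:] * [:-z,1:] * h"
  shows "poly (pderiv PC) z = 0"
proof -
  have z0: "poly [:-z,1:] z = 0" by simp
  have e: "pderiv PC = [:-z,1:] * pderiv ([:-z,1:] * h) + ([:-z,1:] * h) * pderiv [:-z,1:]"
    unfolding assms by (simp only: mult.assoc pderiv_mult[of "[:-z,1:]" "[:-z,1:] * h"])
  show ?thesis by (simp only: e poly_add poly_mult z0 mult_zero_left mult_zero_right add_0)
qed

lemma min_poly_exists:
  fixes \<theta> :: complex
  assumes "algebraic_int \<theta>"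
  shows "\<exists>p::rat poly. lead_coeff p = 1 \<and> poly (ratc p) \<theta> = 0 \<and> degree p = alg_degree \<theta> \<and>
      (\<forall>q. q \<noteq> 0 \<and> poly (ratc q) \<theta> = 0 \<longrightarrow> alg_degree \<theta> \<le> degree q)"
proof -
  from assms obtain Q :: "int poly" where Q: "poly (of_int_poly Q) \<theta> = 0" "lead_coeff Q = 1"
    using algebraic_int_altdef_ipoly by blast
  let ?q0 = "of_int_poly Q :: rat poly"
  have "?q0 \<noteq> 0" using Q(2) by auto
  moreover have "poly (ratc ?q0) \<theta> = 0" using Q(1) by (simp add: ratc_of_int)
  ultimately have ex: "\<exists>n. \<exists>p :: rat poly. p \<noteq> 0 \<and> degree p = n \<and> poly (ratc p) \<theta> = 0" by blast
  from LeastI_ex[OF ex] obtain p0 :: "rat poly" where p0: "p0 \<noteq> 0" "degree p0 = alg_degree \<theta>" "poly (ratc p0) \<theta> = 0"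
    unfolding alg_degree_def by blast
  have mn: "\<forall>q. q \<noteq> 0 \<and> poly (ratc q) \<theta> = 0 \<longrightarrow> alg_degree \<theta> \<le> degree q"
    unfolding alg_degree_def by (auto intro: Least_le)
  define p where "p = Polynomial.smult (inverse (lead_coeff p0)) p0"
  have lc: "lead_coeff p0 \<noteq> 0" using p0(1) by simp
  have "lead_coeff p = 1" using lc by (simp add: p_def)
  moreover have "poly (ratc p) \<theta> = 0" using p0 by (simp add: p_def of_rat_hom.map_poly_hom_smult)
  moreover have "degree p = alg_degree \<theta>" using p0(2) lc by (simp add: p_def)
  ultimately show ?thesis using mn by blast
qed



lemma ac_aux1: "X = A*(B*R) \<Longrightarrow> R = A*R' \<Longrightarrow> X = A*A*(B*R')" for X A B R R' :: "'a::comm_semiring_1"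
  by (simp add: ac_simps)
lemma ac_aux2: "X = A*(B*R) \<Longrightarrow> R = B*R' \<Longrightarrow> X = B*B*(A*R')" for X A B R R' :: "'a::comm_semiring_1"
  by (simp add: ac_simps)

lemma alg_part:
  fixes \<theta> :: complex
  assumes pis: "complex_pisot \<theta>" and b1: "1 < cmod \<theta> ^ 2" and b2: "cmod \<theta> ^ 2 < 2"
  shows "alg_degree \<theta> \<ge> 3 \<and> algebraic_unit \<theta> \<and>
     (\<exists>rest. (\<forall>w\<in>set rest. cmod w < 1) \<and> (\<forall>k. \<theta>^k + cnj \<theta>^k + (\<Sum>w\<leftarrow>rest. w^k) \<in> \<int>))"
proof -
  have ai: "algebraic_int \<theta>" and im: "Im \<theta> \<noteq> 0" and gt: "cmod \<theta> > 1"
    and conj: "\<forall>z \<in> galois_conjugates \<theta> - {\<theta>, cnj \<theta>}. cmod z < 1"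
    using pis unfolding complex_pisot_def by auto
  define n where "n = alg_degree \<theta>"
  obtain p where p: "lead_coeff p = 1" "poly (ratc p) \<theta> = 0" "degree p = n"
    and mn: "\<forall>q. q \<noteq> 0 \<and> poly (ratc q) \<theta> = 0 \<longrightarrow> n \<le> degree q"
    using min_poly_exists[OF ai] unfolding n_def by blast
  have p0: "p \<noteq> 0" using p(1) by auto
  have n1: "n \<ge> 1"
  proof (rule ccontr)
    assume "\<not> n \<ge> 1"
    hence "degree p = 0" using p(3) by simp
    hence "p = [:1:]" using p(1) degree_0_id[of p] by simp
    thus False using p(2) by simp
  qed
  have irr: "irreducible p"
  proof (rule irreducibleI)
    show "p \<noteq> 0" by (rule p0)
    show "\<not> p dvd 1" using is_unit_iff_degree[OF p0] n1 p(3) by auto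
  next
    fix a b assume ab: "p = a * b"
    have a0: "a \<noteq> 0" and b0: "b \<noteq> 0" using p0 ab by auto
    have "poly (ratc a) \<theta> * poly (ratc b) \<theta> = 0" using p(2) ab by (simp add: ratc_mult)
    hence disj: "poly (ratc a) \<theta> = 0 \<or> poly (ratc b) \<theta> = 0" by simp
    have dab: "degree p = degree a + degree b" using ab a0 b0 by (simp add: degree_mult_eq)
    show "a dvd 1 \<or> b dvd 1"
    proof (cases "poly (ratc a) \<theta> = 0")
      case True
      hence "n \<le> degree a" using mn a0 by blast
      hence "degree b = 0" using dab p(3) by simp
      thus ?thesis using is_unit_iff_degree[OF b0] by simp
    next
      case False
      hence "poly (ratc b) \<theta> = 0" using disj by simp
      hence "n \<le> degree b" using mn b0 by blast
      hence "degree a = 0" using dab p(3) by simp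
      thus ?thesis using is_unit_iff_degree[OF a0] by simp
    qed
  qed
  obtain Q :: "int poly" where Q: "poly (of_int_poly Q) \<theta> = 0" "lead_coeff Q = 1"
    using ai algebraic_int_altdef_ipoly by blast
  define q0 where "q0 = (of_int_poly Q :: rat poly)"
  have q0r: "poly (ratc q0) \<theta> = 0" using Q(1) by (simp add: q0_def ratc_of_int)
  have "q0 mod p = 0"
  proof (rule ccontr)
    assume ne: "q0 mod p \<noteq> 0"
    have "q0 = q0 div p * p + q0 mod p" by simp
    hence "ratc q0 = ratc (q0 div p) * ratc p + ratc (q0 mod p)"
      by (metis ratc_mult of_rat_hom.map_poly_hom_add)
    hence "poly (ratc (q0 mod p)) \<theta> = 0" using q0r p(2) by (metis add_0 mult_zero_right poly_add poly_mult)
    hence "n \<le> degree (q0 mod p)" using mn ne by blast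
    moreover have "degree (q0 mod p) < degree p" using degree_mod_less'[OF p0 ne] .
    ultimately show False using p(3) by simp
  qed
  hence qdec: "q0 = (q0 div p) * p" by (metis add_0_right div_mult_mod_eq)
  define g where "g = q0 div p"
  have "lead_coeff q0 = 1" using Q(2) by (simp add: q0_def)
  hence lg: "lead_coeff g = 1" using qdec p(1) unfolding g_def by (metis lead_coeff_mult mult_1_right)
  have "of_int_poly Q = p * g" using qdec unfolding g_def q0_def by (simp add: mult.commute)
  from gauss_monic[OF p(1) lg this] obtain P :: "int poly" where P: "of_int_poly P = p" by blast
  have "lead_coeff (of_int_poly P :: rat poly) = 1" using P p(1) by simp
  hence lP: "lead_coeff P = 1" by simp
  define PC where "PC = (of_int_poly P :: complex poly)"
  have PCr: "PC = ratc p" unfolding PC_def P[symmetric] by (simp add: ratc_of_int)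
  have lPC: "lead_coeff PC = 1" using lP by (simp add: PC_def)
  obtain as where as: "Polynomial.smult (lead_coeff PC) (\<Prod>a\<leftarrow>as. [:-a,1:]) = PC" "length as = degree PC"
    using fundamental_theorem_algebra_factorized by blast
  have fac: "PC = (\<Prod>a\<leftarrow>as. [:-a,1:])" using as(1) lPC by simp
  have degPC: "degree PC = n" using PCr p(3) by (simp add: of_rat_hom.degree_map_poly_hom)
  have lenas: "length as = n" using as(2) degPC by simp
  have root_iff: "\<And>z. poly PC z = 0 \<longleftrightarrow> z \<in> set as" using fac linprod_root_iff by metis
  have rootp: "\<And>z. poly (ratc p) z = 0 \<Longrightarrow> z \<in> galois_conjugates \<theta>"
    unfolding galois_conjugates_def using p0 irr p(2) by blast
  have thin: "\<theta> \<in> set as" using root_iff PCr p(2) by simp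
  have "poly (ratc p) (cnj \<theta>) = 0" using p(2) ratc_cnj by simp
  hence cthin: "cnj \<theta> \<in> set as" using root_iff PCr by simp
  have ne: "cnj \<theta> \<noteq> \<theta>" using im by (auto simp: complex_eq_iff)
  define rest where "rest = remove1 (cnj \<theta>) (remove1 \<theta> as)"
  have cth2: "cnj \<theta> \<in> set (remove1 \<theta> as)" using cthin ne by (simp add: in_set_remove1)
  have PCfac: "PC = [:-\<theta>,1:] * ([:-cnj \<theta>,1:] * (\<Prod>a\<leftarrow>rest. [:-a,1:]))"
    unfolding fac rest_def using prod_list_remove1[OF thin] prod_list_remove1[OF cth2] by metis
  have sumfac: "\<And>k. (\<Sum>a\<leftarrow>as. a^k) = \<theta>^k + (cnj \<theta>^k + (\<Sum>a\<leftarrow>rest. a^k))"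
    unfolding rest_def using sum_list_remove1'[OF thin] sum_list_remove1'[OF cth2] by metis
  have pdne: "pderiv p \<noteq> 0" using pderiv_eq_0_iff[of p] p(3) n1 by simp
  have pdd: "degree (pderiv p) < n" using degree_pderiv[of p] p(3) n1 by simp
  have pd: "poly (ratc (pderiv p)) \<theta> \<noteq> 0" using mn pdne pdd by force
  have pdc: "poly (ratc (pderiv p)) (cnj \<theta>) \<noteq> 0" using pd ratc_cnj by simp
  have dPC: "pderiv PC = ratc (pderiv p)" using PCr by (simp add: of_rat_hom.map_poly_pderiv)
  have thnot: "\<theta> \<notin> set rest"
  proof
    assume th: "\<theta> \<in> set rest"
    have "PC = [:-\<theta>,1:] * [:-\<theta>,1:] * ([:-cnj \<theta>,1:] * (\<Prod>a\<leftarrow>remove1 \<theta> rest. [:-a,1:]))"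
      by (rule ac_aux1[OF PCfac prod_list_remove1[of \<theta> rest "\<lambda>a. [:-a,1:]", OF th]])
    hence "poly (pderiv PC) \<theta> = 0" by (rule double_root_deriv)
    thus False using pd dPC by simp
  qed
  have cthnot: "cnj \<theta> \<notin> set rest"
  proof
    assume th: "cnj \<theta> \<in> set rest"
    have "PC = [:-cnj \<theta>,1:] * [:-cnj \<theta>,1:] * ([:-\<theta>,1:] * (\<Prod>a\<leftarrow>remove1 (cnj \<theta>) rest. [:-a,1:]))"
      by (rule ac_aux2[OF PCfac prod_list_remove1[of "cnj \<theta>" rest "\<lambda>a. [:-a,1:]", OF th]])
    hence "poly (pderiv PC) (cnj \<theta>) = 0" by (rule double_root_deriv)
    thus False using pdc dPC by simp
  qed
  have restsub: "set rest \<subseteq> set as" unfolding rest_def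
    by (meson set_remove1_subset subset_trans)
  have small: "\<forall>w\<in>set rest. cmod w < 1"
  proof
    fix w assume w: "w \<in> set rest"
    hence "poly (ratc p) w = 0" using restsub root_iff PCr by auto
    hence "w \<in> galois_conjugates \<theta>" by (rule rootp)
    moreover have "w \<noteq> \<theta>" "w \<noteq> cnj \<theta>" using w thnot cthnot by auto
    ultimately show "cmod w < 1" using conj by auto
  qed
  have psum: "\<forall>k. \<theta>^k + cnj \<theta>^k + (\<Sum>w\<leftarrow>rest. w^k) \<in> \<int>"
  proof
    fix k
    have "(\<Sum>a\<leftarrow>as. a^k) \<in> \<int>" using psum_int[OF lP] fac unfolding PC_def by blast
    thus "\<theta>^k + cnj \<theta>^k + (\<Sum>w\<leftarrow>rest. w^k) \<in> \<int>" using sumfac[of k] by (simp add: add.assoc)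
  qed
  have l1: "length (remove1 \<theta> as) = n - 1" using thin lenas by (simp add: length_remove1)
  have l2: "length rest = length (remove1 \<theta> as) - 1" using cth2 unfolding rest_def by (simp add: length_remove1)
  have "length (remove1 \<theta> as) > 0" using cth2 by (cases "remove1 \<theta> as") auto
  hence lenrest: "length rest + 2 = n" using l1 l2 by linarith
  have c0: "poly PC 0 = of_int (Polynomial.coeff P 0)" by (simp add: PC_def poly_0_coeff_0)
  have pc0: "poly PC 0 = \<theta> * cnj \<theta> * (\<Prod>a\<leftarrow>rest. 0 - a)"
  proof -
    have g: "\<And>X::complex. (0 - \<theta>) * ((0 - cnj \<theta>) * X) = \<theta> * cnj \<theta> * X" by simp
    have lin0: "\<And>z::complex. poly [:-z,1:] 0 = 0 - z" by simp
    show ?thesis unfolding PCfac poly_mult poly_linprod lin0 by (rule g)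
  qed
  have nsq: "\<theta> * cnj \<theta> = of_real (cmod \<theta> ^ 2)" using complex_norm_square[of \<theta>] by (simp only:)
  have deg3: "n \<ge> 3"
  proof (rule ccontr)
    assume "\<not> n \<ge> 3"
    hence "length rest = 0" using lenrest by linarith
    hence "rest = []" by simp
    hence "of_int (Polynomial.coeff P 0) = (of_real (cmod \<theta> ^ 2) :: complex)" using c0 pc0 nsq by simp
    hence e: "real_of_int (Polynomial.coeff P 0) = cmod \<theta> ^ 2"
      by (metis of_real_eq_iff of_real_of_int_eq)
    hence "1 < Polynomial.coeff P 0" "Polynomial.coeff P 0 < 2" using b1 b2 by linarith+
    thus False by simp
  qed
  have unit: "algebraic_int (inverse \<theta>)"
  proof -
    define c where "c = Polynomial.coeff P 0"
    have cnz: "c \<noteq> 0"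
    proof
      assume "c = 0"
      hence "Polynomial.coeff p 0 = 0" using P unfolding c_def by (metis coeff_map_poly of_int_0)
      hence "poly p 0 = 0" by (simp add: poly_0_coeff_0)
      hence "[:-0,1:] dvd p" using poly_eq_0_iff_dvd by blast
      then obtain p1 where p1: "p = [:0,1:] * p1" by (auto elim: dvdE)
      have p10: "p1 \<noteq> 0" using p0 p1 by auto
      have "degree p = 1 + degree p1" using p1 p10 by (simp add: degree_mult_eq)
      hence dp1: "degree p1 < n" using p(3) by simp
      have "poly (ratc p) \<theta> = \<theta> * poly (ratc p1) \<theta>" unfolding p1 ratc_mult poly_mult by simp
      moreover have "\<theta> \<noteq> 0" using gt by auto
      ultimately have "poly (ratc p1) \<theta> = 0" using p(2) by simp
      hence "n \<le> degree p1" using mn p10 by blast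
      thus False using dp1 by simp
    qed
    have "cmod (poly PC 0) = cmod \<theta> ^ 2 * cmod (\<Prod>a\<leftarrow>rest. 0 - a)"
      unfolding pc0 by (simp add: norm_mult power2_eq_square)
    also have "\<dots> \<le> cmod \<theta> ^ 2 * 1"
      by (intro mult_left_mono prod_cmod_le1[OF small]) auto
    finally have "\<bar>real_of_int c\<bar> < 2" using b2 c0 unfolding c_def by simp
    hence "\<bar>c\<bar> < 2" by simp
    hence "c = 1 \<or> c = -1" using cnz by linarith
    hence cc: "c * c = 1" by auto
    define P' where "P' = (of_int_poly (Polynomial.smult c P) :: complex poly)"
    have "poly P' \<theta> = 0" using PCr p(2) unfolding P'_def PC_def by (simp add: hom_distribs)
    moreover have "\<forall>i. Polynomial.coeff P' i \<in> \<int>" by (simp add: P'_def)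
    moreover have "Polynomial.coeff P' 0 = 1" using cc by (simp add: P'_def c_def)
    ultimately show ?thesis by (rule algebraic_int_inverse)
  qed
  show ?thesis using deg3 unit ai small psum unfolding n_def algebraic_unit_def by blast
qed



lemma cos_nz:
  assumes "algebraic_int (x::complex)"
  shows "cos (2 * pi * Re (x ^ k)) \<noteq> 0"
proof
  assume c: "cos (2 * pi * Re (x ^ k)) = 0"
  have u: "algebraic_int (x^k + cnj x ^ k)" using alg_int_re_pow[OF assms] .
  have ue: "x^k + cnj x ^ k = of_real (2 * Re (x^k))" using complex_add_cnj[of "x^k"] by simp
  from c obtain i where i: "odd i" "2 * pi * Re (x ^ k) = real_of_int i * (pi / 2)"
    using cos_zero_iff_int by blast
  have r: "2 * Re (x^k) = real_of_int i / 2" using i(2) by (simp add: field_simps)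
  have ue2: "x^k + cnj x ^ k = of_int i / 2" unfolding ue r by simp
  have "(of_int i / 2 :: complex) \<in> \<rat>" by simp
  hence "(of_int i / 2 :: complex) \<in> \<int>" using u ue2 rational_algebraic_int_is_int by metis
  then obtain m where m: "(of_int i / 2 :: complex) = of_int m" by (auto elim: Ints_cases)
  hence "(of_int i :: complex) = of_int (2 * m)" by (simp add: field_simps)
  hence "i = 2 * m" using of_int_eq_iff by blast
  thus False using i(1) by simp
qed

lemma abs_cos_shift_int:
  fixes m :: int
  shows "\<bar>cos (pi * of_int m - y)\<bar> = \<bar>cos y\<bar>"
  by (simp add: cos_diff)

lemma one_minus_cos_le: "\<bar>1 - cos y\<bar> \<le> \<bar>y\<bar>" for y :: real
proof -
  have "cos y = cos (2 * (y/2))" by simp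
  also have "\<dots> = 1 - 2 * (sin (y/2))^2" by (rule cos_double_sin)
  finally have e: "1 - cos y = 2 * (sin (y/2))^2" by simp
  have "(sin (y/2))^2 = \<bar>sin (y/2)\<bar> * \<bar>sin (y/2)\<bar>" by (simp add: power2_eq_square)
  also have "\<dots> \<le> \<bar>sin (y/2)\<bar> * 1" by (intro mult_left_mono abs_sin_le_one) simp
  also have "\<dots> = \<bar>sin (y/2)\<bar>" by simp
  also have "\<dots> \<le> \<bar>y/2\<bar>" by (rule abs_sin_x_le_abs_x)
  finally show ?thesis using e by simp
qed

lemma one_minus_abs_cos_le: "\<bar>\<bar>cos y\<bar> - 1\<bar> \<le> \<bar>y\<bar>" for y :: real
proof -
  have "\<bar>\<bar>cos y\<bar> - 1\<bar> = 1 - \<bar>cos y\<bar>" using abs_cos_le_one[of y] by simp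
  also have "\<dots> \<le> 1 - cos y" by simp
  also have "\<dots> \<le> \<bar>y\<bar>" using one_minus_cos_le[of y] by simp
  finally show ?thesis .
qed

lemma summable_sum_list:
  fixes f :: "'a \<Rightarrow> nat \<Rightarrow> real"
  assumes "\<forall>w\<in>set ws. summable (f w)"
  shows "summable (\<lambda>k. \<Sum>w\<leftarrow>ws. f w k)"
  using assms
proof (induction ws)
  case Nil then show ?case by simp
next
  case (Cons a ws)
  hence "summable (\<lambda>k. f a k + (\<Sum>w\<leftarrow>ws. f w k))" by (intro summable_add) auto
  thus ?case by simp
qed

lemma norm_sum_list_le: "cmod (\<Sum>w\<leftarrow>ws. f w) \<le> (\<Sum>w\<leftarrow>ws. cmod (f w))"
proof (induction ws)
  case Nil then show ?case by simp
next
  case (Cons a ws)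
  have "cmod (\<Sum>w\<leftarrow>a#ws. f w) = cmod (f a + (\<Sum>w\<leftarrow>ws. f w))" by simp
  also have "\<dots> \<le> cmod (f a) + cmod (\<Sum>w\<leftarrow>ws. f w)" by (rule norm_triangle_ineq)
  also have "\<dots> \<le> cmod (f a) + (\<Sum>w\<leftarrow>ws. cmod (f w))" using Cons by simp
  finally show ?case by simp
qed

lemma prod_ge_limit:
  fixes h :: "nat \<Rightarrow> real"
  assumes h01: "\<And>i. 0 \<le> h i \<and> h i \<le> 1" and hnz: "\<And>i. h i \<noteq> 0"
    and sm: "summable (\<lambda>i. \<bar>h i - 1\<bar>)"
  shows "\<exists>H>0. \<forall>N. (\<Prod>i<N. h i) \<ge> H"
proof -
  have "abs_convergent_prod h" using sm by (intro summable_imp_abs_convergent_prod) simp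
  hence cp: "convergent_prod h" by (rule abs_convergent_prod_imp_convergent_prod)
  define H where "H = prodinf h"
  have Hnz: "H \<noteq> 0" unfolding H_def using cp hnz by (rule prodinf_nonzero)
  have lim: "(\<lambda>n. \<Prod>i\<le>n. h i) \<longlonglongrightarrow> H" unfolding H_def using cp by (rule convergent_prod_LIMSEQ)
  have dec: "decseq (\<lambda>n. \<Prod>i\<le>n. h i)"
  proof (rule decseq_SucI)
    fix n
    have "(\<Prod>i\<le>Suc n. h i) = (\<Prod>i\<le>n. h i) * h (Suc n)" by simp
    also have "\<dots> \<le> (\<Prod>i\<le>n. h i) * 1"
      using h01 by (intro mult_left_mono prod_nonneg) auto
    finally show "(\<Prod>i\<le>Suc n. h i) \<le> (\<Prod>i\<le>n. h i)" by simp
  qed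
  have ge: "\<And>n. H \<le> (\<Prod>i\<le>n. h i)" using decseq_ge[OF dec lim] .
  have "H \<ge> 0" using lim by (rule LIMSEQ_le_const) (use h01 in \<open>auto intro: prod_nonneg\<close>)
  hence Hpos: "H > 0" using Hnz by simp
  have "\<forall>N. (\<Prod>i<N. h i) \<ge> H"
  proof
    fix N show "(\<Prod>i<N. h i) \<ge> H"
    proof (cases N)
      case 0
      have "H \<le> (\<Prod>i\<le>0. h i)" by (rule ge)
      also have "\<dots> \<le> 1" using h01[of 0] by simp
      finally show ?thesis using 0 by simp
    next
      case (Suc M)
      have "H \<le> (\<Prod>i\<le>M. h i)" by (rule ge)
      thus ?thesis using Suc by (simp add: lessThan_Suc_atMost)
    qed
  qed
  thus ?thesis using Hpos by blast
qed



lemma partial_split: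
  fixes f :: "nat \<Rightarrow> real"
  shows "(\<Prod>n<m + N. f n) = (\<Prod>n<N. f n) * (\<Prod>j<m. f (N + j))"
  by (induction m) (simp_all add: ac_simps)

lemma prod_reflect:
  fixes h :: "nat \<Rightarrow> real"
  shows "(\<Prod>n<N. h (N - Suc n)) = (\<Prod>i<N. h i)"
  by (rule prod.reindex_bij_witness[of _ "\<lambda>i. N - Suc i" "\<lambda>i. N - Suc i"]) auto

theorem mainTheorem8:
  fixes \<theta> lam :: complex
  assumes "complex_pisot \<theta>" and "1 < cmod \<theta> ^ 2" and "cmod \<theta> ^ 2 < 2"
    and "lam = 1 / \<theta>"
  shows "alg_degree \<theta> \<ge> 3 \<and> algebraic_unit \<theta> \<and>
    (\<exists>\<delta>>0. \<forall>N::nat. N \<ge> 1 \<longrightarrow> \<bar>nu_hat lam (2 * pi * cnj \<theta> ^ N)\<bar> \<ge> \<delta>) \<and>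
    \<not> ((nu_hat lam \<longlongrightarrow> 0) at_infinity)"
proof -
  from alg_part[OF assms(1-3)] obtain rest where deg: "alg_degree \<theta> \<ge> 3" and unit: "algebraic_unit \<theta>"
    and small: "\<forall>w\<in>set rest. cmod w < 1"
    and psum: "\<forall>k. \<theta>^k + cnj \<theta>^k + (\<Sum>w\<leftarrow>rest. w^k) \<in> \<int>" by blast
  have ai: "algebraic_int \<theta>" using unit unfolding algebraic_unit_def by simp
  have lam: "lam = inverse \<theta>" using assms(4) by (simp add: inverse_eq_divide)
  have ail: "algebraic_int lam" using unit lam unfolding algebraic_unit_def by simp
  have gt: "cmod \<theta> > 1" using assms(1) unfolding complex_pisot_def by simp
  have th0: "\<theta> \<noteq> 0" using gt by auto
  have lamth: "lam * \<theta> = 1" using lam th0 by simp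
  have cl: "cmod lam < 1" using gt lam by (simp add: norm_inverse inverse_less_1_iff)
  define g where "g = (\<lambda>j. cos (2 * pi * Re (lam ^ j)))"
  define h where "h = (\<lambda>i. \<bar>cos (2 * pi * Re (\<theta> ^ Suc i))\<bar>)"
  have gsum: "summable (\<lambda>j. norm (g j - 1))"
  proof (rule summable_comparison_test)
    show "\<exists>N. \<forall>n\<ge>N. norm (norm (g n - 1)) \<le> 2 * pi * cmod lam ^ n"
    proof (intro exI allI impI)
      fix n :: nat
      have "norm (norm (g n - 1)) = \<bar>1 - cos (2 * pi * Re (lam ^ n))\<bar>" by (simp add: g_def abs_minus_commute)
      also have "\<dots> \<le> \<bar>2 * pi * Re (lam ^ n)\<bar>" by (rule one_minus_cos_le)
      also have "\<dots> = 2 * pi * \<bar>Re (lam ^ n)\<bar>" by (simp add: abs_mult)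
      also have "\<dots> \<le> 2 * pi * cmod (lam ^ n)" by (intro mult_left_mono abs_Re_le_cmod) simp
      also have "\<dots> = 2 * pi * cmod lam ^ n" by (simp add: norm_power)
      finally show "norm (norm (g n - 1)) \<le> 2 * pi * cmod lam ^ n" .
    qed
    show "summable (\<lambda>n. 2 * pi * cmod lam ^ n)"
      using cl by (intro summable_mult summable_geometric) simp
  qed
  have cpg: "convergent_prod g"
    using gsum by (intro abs_convergent_prod_imp_convergent_prod summable_imp_abs_convergent_prod)
  define G where "G = prodinf g"
  have Gnz: "G \<noteq> 0" unfolding G_def using cpg by (rule prodinf_nonzero) (simp add: g_def cos_nz[OF ail])
  have glim: "(\<lambda>m. \<Prod>j<m. g j) \<longlonglongrightarrow> G"
  proof (rule LIMSEQ_imp_Suc)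
    show "(\<lambda>m. \<Prod>j<Suc m. g j) \<longlonglongrightarrow> G"
      unfolding lessThan_Suc_atMost G_def using cpg by (rule convergent_prod_LIMSEQ)
  qed
  have hb: "\<bar>h i - 1\<bar> \<le> pi * (\<Sum>w\<leftarrow>rest. cmod w ^ Suc i)" for i
  proof -
    define k where "k = Suc i"
    define S where "S = (\<Sum>w\<leftarrow>rest. w^k)"
    obtain m where m: "\<theta>^k + cnj \<theta>^k + S = of_int m" using psum unfolding S_def by (auto elim: Ints_cases)
    have "Re (\<theta>^k + cnj \<theta>^k + S) = of_int m" using m by simp
    moreover have "Re (cnj \<theta> ^ k) = Re (\<theta> ^ k)"
    proof -
      have rc: "\<And>w. Re (cnj w) = Re w" by simp
      show ?thesis by (metis rc complex_cnj_power)
    qed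
    ultimately have re: "2 * Re (\<theta>^k) = of_int m - Re S" by simp
    have arg: "2 * pi * Re (\<theta>^k) = pi * of_int m - pi * Re S"
      using arg_cong[OF re, of "\<lambda>t. pi * t"] by (simp add: algebra_simps)
    have "h i = \<bar>cos (pi * of_int m - pi * Re S)\<bar>"
      unfolding h_def k_def[symmetric] arg ..
    also have "\<dots> = \<bar>cos (pi * Re S)\<bar>" by (rule abs_cos_shift_int)
    finally have "\<bar>h i - 1\<bar> = \<bar>\<bar>cos (pi * Re S)\<bar> - 1\<bar>" by simp
    also have "\<dots> \<le> \<bar>pi * Re S\<bar>" by (rule one_minus_abs_cos_le)
    also have "\<dots> = pi * \<bar>Re S\<bar>" by (simp add: abs_mult)
    also have "\<dots> \<le> pi * cmod S" by (intro mult_left_mono abs_Re_le_cmod) simp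
    also have "\<dots> \<le> pi * (\<Sum>w\<leftarrow>rest. cmod (w^k))" unfolding S_def
      by (intro mult_left_mono norm_sum_list_le) simp
    also have "\<dots> = pi * (\<Sum>w\<leftarrow>rest. cmod w ^ Suc i)" by (simp only: norm_power k_def)
    finally show ?thesis .
  qed
  have hsum: "summable (\<lambda>i. \<bar>h i - 1\<bar>)"
  proof (rule summable_comparison_test)
    show "\<exists>N. \<forall>n\<ge>N. norm \<bar>h n - 1\<bar> \<le> pi * (\<Sum>w\<leftarrow>rest. cmod w ^ Suc n)" using hb by simp
    have "summable (\<lambda>i. \<Sum>w\<leftarrow>rest. cmod w ^ Suc i)"
    proof (rule summable_sum_list, intro ballI)
      fix w assume "w \<in> set rest"
      hence "cmod w < 1" using small by blast
      hence "summable (\<lambda>i. cmod w * cmod w ^ i)" by (intro summable_mult summable_geometric) simp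
      thus "summable (\<lambda>i. cmod w ^ Suc i)" by simp
    qed
    thus "summable (\<lambda>i. pi * (\<Sum>w\<leftarrow>rest. cmod w ^ Suc i))" by (rule summable_mult)
  qed
  have h01: "\<And>i. 0 \<le> h i \<and> h i \<le> 1" by (simp add: h_def)
  have hnz: "\<And>i. h i \<noteq> 0" unfolding h_def using cos_nz[OF ai] by (simp del: power_Suc)
  obtain H where H: "H > 0" "\<forall>N. (\<Prod>i<N. h i) \<ge> H" using prod_ge_limit[OF h01 hnz hsum] by blast
  define \<delta> where "\<delta> = H * \<bar>G\<bar>"
  have dpos: "\<delta> > 0" using H(1) Gnz by (simp add: \<delta>_def)
  have key: "\<bar>nu_hat lam (2 * pi * cnj \<theta> ^ N)\<bar> \<ge> \<delta>" for N :: nat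
  proof -
    define \<xi> :: complex where "\<xi> = 2 * pi * cnj \<theta> ^ N"
    have cx: "cnj \<xi> = 2 * of_real pi * \<theta> ^ N" by (simp add: \<xi>_def)
    define f where "f = (\<lambda>n. cos (Re (lam ^ n * cnj \<xi>)))"
    have fg: "f (N + j) = g j" for j
    proof -
      have "lam ^ (N + j) * cnj \<xi> = 2 * of_real pi * (lam ^ j * (lam * \<theta>) ^ N)"
        unfolding cx by (simp add: power_add power_mult_distrib algebra_simps)
      also have "\<dots> = 2 * of_real pi * lam ^ j" using lamth by simp
      finally have e: "lam ^ (N + j) * cnj \<xi> = 2 * of_real pi * lam ^ j" .
      show ?thesis unfolding f_def g_def e by simp
    qed
    have fh: "\<bar>f n\<bar> = h (N - Suc n)" if "n < N" for n
    proof -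
      have e: "N = n + Suc (N - Suc n)" using that by simp
      have "lam ^ n * cnj \<xi> = 2 * of_real pi * ((lam * \<theta>) ^ n * \<theta> ^ Suc (N - Suc n))"
        unfolding cx by (subst e) (simp only: power_add power_mult_distrib ac_simps)
      also have "\<dots> = 2 * of_real pi * \<theta> ^ Suc (N - Suc n)" using lamth by simp
      finally have e: "lam ^ n * cnj \<xi> = 2 * of_real pi * \<theta> ^ Suc (N - Suc n)" .
      show ?thesis unfolding f_def h_def e by simp
    qed
    define A where "A = (\<Prod>n<N. f n)"
    have absA: "\<bar>A\<bar> \<ge> H"
    proof -
      have "\<bar>A\<bar> = (\<Prod>n<N. \<bar>f n\<bar>)" by (simp add: A_def abs_prod)
      also have "\<dots> = (\<Prod>n<N. h (N - Suc n))" by (intro prod.cong refl) (simp add: fh)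
      also have "\<dots> = (\<Prod>i<N. h i)" by (rule prod_reflect)
      finally show ?thesis using H(2) by simp
    qed
    have "(\<lambda>m. \<Prod>n<m + N. f n) \<longlonglongrightarrow> A * G"
    proof -
      have "(\<lambda>m. A * (\<Prod>j<m. g j)) \<longlonglongrightarrow> A * G" by (intro tendsto_mult tendsto_const glim)
      moreover have "(\<lambda>m. \<Prod>n<m + N. f n) = (\<lambda>m. A * (\<Prod>j<m. g j))"
        by (rule ext) (simp add: partial_split A_def fg)
      ultimately show ?thesis by simp
    qed
    hence "(\<lambda>M. \<Prod>n<M. f n) \<longlonglongrightarrow> A * G" by (rule LIMSEQ_offset)
    hence "nu_hat lam \<xi> = A * G" unfolding nu_hat_def f_def by (rule limI)
    hence "\<bar>nu_hat lam \<xi>\<bar> = \<bar>A\<bar> * \<bar>G\<bar>" by (simp add: abs_mult)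
    moreover have "\<bar>A\<bar> * \<bar>G\<bar> \<ge> H * \<bar>G\<bar>" using absA by (intro mult_right_mono) simp_all
    ultimately show ?thesis unfolding \<delta>_def \<xi>_def by simp
  qed
  have notlim: "\<not> ((nu_hat lam \<longlongrightarrow> 0) at_infinity)"
  proof
    assume lim0: "(nu_hat lam \<longlongrightarrow> 0) at_infinity"
    have base: "filterlim (\<lambda>N. cnj \<theta> ^ N) at_infinity sequentially"
      using gt by (intro filterlim_realpow_sequentially_gt1) simp
    have fl: "filterlim (\<lambda>N. 2 * pi * cnj \<theta> ^ N) at_infinity sequentially"
      unfolding filterlim_at_infinity[OF order_refl]
    proof (intro allI impI)
      fix r :: real assume r: "r > 0"
      hence "r / (2 * pi) > 0" by simp
      hence ev: "\<forall>\<^sub>F N in sequentially. r / (2 * pi) \<le> norm (cnj \<theta> ^ N)"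
        using base unfolding filterlim_at_infinity[OF order_refl] by blast
      show "\<forall>\<^sub>F N in sequentially. r \<le> norm (2 * pi * cnj \<theta> ^ N)"
      proof (rule eventually_mono[OF ev])
        fix N assume a: "r / (2 * pi) \<le> norm (cnj \<theta> ^ N)"
        have "norm (2 * complex_of_real pi * cnj \<theta> ^ N) = 2 * pi * norm (cnj \<theta> ^ N)"
          by (simp add: norm_mult)
        moreover have "r \<le> 2 * pi * norm (cnj \<theta> ^ N)" using a pi_gt_zero by (simp add: pos_divide_le_eq mult.commute)
        ultimately show "r \<le> norm (2 * pi * cnj \<theta> ^ N)" by simp
      qed
    qed
    have "((\<lambda>N. nu_hat lam (2 * pi * cnj \<theta> ^ N)) \<longlongrightarrow> 0) sequentially"
      by (rule filterlim_compose[OF lim0 fl])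
    hence "\<forall>\<^sub>F N in sequentially. dist (nu_hat lam (2 * pi * cnj \<theta> ^ N)) 0 < \<delta>"
      using dpos by (rule tendstoD)
    then obtain N0 where "\<forall>n\<ge>N0. dist (nu_hat lam (2 * pi * cnj \<theta> ^ n)) 0 < \<delta>"
      unfolding eventually_sequentially by blast
    hence "dist (nu_hat lam (2 * pi * cnj \<theta> ^ N0)) 0 < \<delta>" by blast
    thus False using key[of N0] by simp
  qed
  show ?thesis using deg unit key dpos notlim by blast
qed

end
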